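(* Let $X,Y$ be Banach spaces, $T:X\to Y$ a bounded linear operator, $q\ge 2$ and $c>0$. Then $T$ is uniformly $q$-convex with constant $c$ if and only if $T$ has strong martingale cotype $q$ with constant $c$.
   Context: Dyadic setting: for $k=0,1,2,\dots$, $\mathcal F_k$ is the $\sigma$-algebra on $[0,1)$ generated by the dyadic intervals $[i/2^k,(i+1)/2^k)$, $i=0,\dots,2^k-1$ (so $\mathcal F_0$ is trivial), with Lebesgue measure. A sequence $d_0,d_1,\dots,d_n$ of $X$-valued functions on $[0,1)$ is a sequence of differences of a dyadic martingale if each $d_k$ is $\mathcal F_k$-measurable and $\mathbb E(d_k\mid\mathcal F_{k-1})=0$ for $k\ge1$ (so $d_0$ is constant). For $f:[0,1)\to X$, $\|f|L_q\|=(\int_0^1\|f(t)\|^q\,dt)^{1/q}$. $T$ is uniformly $q$-convex with constant $c$ if for all $x_+,x_-\in X$: $\left\|\frac{Tx_+-Tx_-}{2}\right\|\le c\left(\frac{\|x_+\|^q+\|x_-\|^q}{2}-\left\|\frac{x_++x_-}{2}\right\|^q\right)^{1/q}$. $T$ has strong martingale cotype $q$ with constant $c$ if for all $n\in\mathbb N$ and all sequences $d_0,\dots,d_n$ of $X$-valued differences of dyadic martingales with $d_0\equiv x$: $\left(\|x\|^q+c^{-q}\sum_{k=1}^n\|Td_k|L_q\|^q\right)^{1/q}\le\left\|\sum_{k=0}^n d_k\Big|L_q\right\|$. *)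

theory Defs
  imports "HOL-Analysis.Analysis"
begin

definition dyadic_intervals :: "nat \<Rightarrow> real set set" where
  "dyadic_intervals k = {{real i / 2^k ..< real (i+1) / 2^k} | i. i < 2^k}"

definition dyF :: "nat \<Rightarrow> real measure" where
  "dyF k = sigma {0..<1} (dyadic_intervals k)"

definition Lq_norm :: "real \<Rightarrow> (real \<Rightarrow> 'a::real_normed_vector) \<Rightarrow> real" where
  "Lq_norm q f = (LINT t:{0..<1}|lborel. norm (f t) powr q) powr (1/q)"

text \<open>d_0,...,d_n is a sequence of differences of a dyadic martingale:
  each d_k is F_k-measurable, and E(d_k | F_{k-1}) = 0 for k >= 1, i.e. the
  integral of d_k over every set of F_{k-1} vanishes. Since the library's Bochner
  integral requires a second-countable codomain, the vanishing of the vector integral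
  is expressed weakly (via all bounded linear functionals, equivalent by Hahn-Banach).\<close>
definition dyadic_mart_diff :: "nat \<Rightarrow> (nat \<Rightarrow> real \<Rightarrow> 'a::banach) \<Rightarrow> bool" where
  "dyadic_mart_diff n d \<longleftrightarrow>
     (\<forall>k\<le>n. d k \<in> borel_measurable (dyF k)) \<and>
     (\<forall>k\<in>{1..n}. \<forall>A\<in>sets (dyF (k-1)). (\<forall>\<phi>::'a \<Rightarrow> real. bounded_linear \<phi> \<longrightarrow> (LINT t:A|lborel. \<phi> (d k t)) = 0))"

definition uniformly_q_convex ::
  "('a::banach \<Rightarrow> 'b::banach) \<Rightarrow> real \<Rightarrow> real \<Rightarrow> bool" where
  "uniformly_q_convex T q c \<longleftrightarrow>
     (\<forall>xp xm. norm ((1/2) *\<^sub>R (T xp - T xm)) \<le>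
        c * ((norm xp powr q + norm xm powr q) / 2 - norm ((1/2) *\<^sub>R (xp + xm)) powr q) powr (1/q))"

definition strong_mart_cotype ::
  "('a::banach \<Rightarrow> 'b::banach) \<Rightarrow> real \<Rightarrow> real \<Rightarrow> bool" where
  "strong_mart_cotype T q c \<longleftrightarrow>
     (\<forall>n x d. dyadic_mart_diff n d \<and> (\<forall>t\<in>{0..<1}. d 0 t = x) \<longrightarrow>
        (norm x powr q + c powr (-q) * (\<Sum>k\<in>{1..n}. Lq_norm q (\<lambda>t. T (d k t)) powr q)) powr (1/q)
          \<le> Lq_norm q (\<lambda>t. \<Sum>k\<le>n. d k t))"

end

theory Submission
  imports Defs
begin

definition hbgood :: "('a::real_normed_vector \<times> real) set \<Rightarrow> 'a \<Rightarrow> bool" where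
 "hbgood G z \<longleftrightarrow> (\<forall>x a b. (x,a)\<in>G \<longrightarrow> (x,b)\<in>G \<longrightarrow> a = b)
   \<and> (\<forall>x a y b. (x,a)\<in>G \<longrightarrow> (y,b)\<in>G \<longrightarrow> (x+y,a+b)\<in>G)
   \<and> (\<forall>x a r. (x,a)\<in>G \<longrightarrow> (r *\<^sub>R x, r*a)\<in>G)
   \<and> (\<forall>x a. (x,a)\<in>G \<longrightarrow> a \<le> norm x) \<and> (z, norm z) \<in> G"

lemma hb_base:
  assumes "z \<noteq> 0"
  shows "hbgood {(r *\<^sub>R z, r * norm z) | r. True} z"
  unfolding hbgood_def
proof (intro conjI allI impI)
  fix x a b assume "(x,a) \<in> {(r *\<^sub>R z, r * norm z) | r. True}" "(x,b) \<in> {(r *\<^sub>R z, r * norm z) | r. True}"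
  then obtain r s where "x = r *\<^sub>R z" "a = r * norm z" "x = s *\<^sub>R z" "b = s * norm z" by blast
  then have "r = s" using assms by (metis scaleR_cancel_right)
  then show "a = b" using \<open>a = _\<close> \<open>b = _\<close> by simp
next
  fix x a y b assume "(x,a) \<in> {(r *\<^sub>R z, r * norm z) | r. True}" "(y,b) \<in> {(r *\<^sub>R z, r * norm z) | r. True}"
  then obtain r s where "x = r *\<^sub>R z" "a = r * norm z" "y = s *\<^sub>R z" "b = s * norm z" by auto
  then show "(x+y, a+b) \<in> {(r *\<^sub>R z, r * norm z) | r. True}"
    by (auto intro!: exI[of _ "r+s"] simp: algebra_simps scaleR_add_left)
next
  fix x a r assume "(x,a) \<in> {(r *\<^sub>R z, r * norm z) | r. True}"
  then obtain s where "x = s *\<^sub>R z" "a = s * norm z" by auto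
  then show "(r *\<^sub>R x, r*a) \<in> {(r *\<^sub>R z, r * norm z) | r. True}"
    by (auto intro!: exI[where x="r * s"])
next
  fix x a assume "(x,a) \<in> {(r *\<^sub>R z, r * norm z) | r. True}"
  then obtain s where "x = s *\<^sub>R z" "a = s * norm z" by auto
  then show "a \<le> norm x" by (simp add: mult_right_mono)
next
  show "(z, norm z) \<in> {(r *\<^sub>R z, r * norm z) | r. True}" by (auto intro!: exI[of _ 1])
qed

lemma hb_chain:
  assumes C: "C \<in> chains {G. hbgood G z}" and ne: "C \<noteq> {}"
  shows "hbgood (\<Union>C) z"
proof -
  have sub: "\<And>G. G \<in> C \<Longrightarrow> hbgood G z" using C by (auto simp: chains_def)
  have cmp: "\<And>X Y. X \<in> C \<Longrightarrow> Y \<in> C \<Longrightarrow> X \<subseteq> Y \<or> Y \<subseteq> X"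
    using C by (auto simp: chains_def chain_subset_def)
  have two: "\<exists>G\<in>C. p \<in> G \<and> p' \<in> G" if h: "p \<in> \<Union>C" "p' \<in> \<Union>C" for p p'
  proof -
    obtain X Y where "X\<in>C" "Y\<in>C" "p\<in>X" "p'\<in>Y" using h by blast
    then show ?thesis using cmp[of X Y] by blast
  qed
  obtain G0 where "G0 \<in> C" using ne by auto
  show ?thesis unfolding hbgood_def
  proof (intro conjI allI impI)
    fix x a b assume "(x,a) \<in> \<Union>C" "(x,b) \<in> \<Union>C"
    then obtain G where "G\<in>C" "(x,a)\<in>G" "(x,b)\<in>G" using two by blast
    then show "a = b" using sub[of G] unfolding hbgood_def by blast
  next
    fix x a y b assume "(x,a) \<in> \<Union>C" "(y,b) \<in> \<Union>C"
    then obtain G where "G\<in>C" "(x,a)\<in>G" "(y,b)\<in>G" using two by blast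
    then show "(x+y,a+b) \<in> \<Union>C" using sub[of G] unfolding hbgood_def by blast
  next
    fix x a r assume "(x,a) \<in> \<Union>C"
    then obtain G where "G\<in>C" "(x,a)\<in>G" by blast
    then show "(r *\<^sub>R x,r*a) \<in> \<Union>C" using sub[of G] unfolding hbgood_def by blast
  next
    fix x a assume "(x,a) \<in> \<Union>C"
    then obtain G where "G\<in>C" "(x,a)\<in>G" by blast
    then show "a \<le> norm x" using sub[of G] unfolding hbgood_def by blast
  next
    show "(z, norm z) \<in> \<Union>C" using sub[of G0] \<open>G0\<in>C\<close> unfolding hbgood_def by blast
  qed
qed

lemma hb_ext:
  assumes M: "hbgood M z" and x0: "x0 \<notin> fst ` M"
  shows "\<exists>M'. hbgood M' z \<and> M \<subseteq> M' \<and> M' \<noteq> M"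
proof -
  have fn1: "\<And>x a b. (x,a)\<in>M \<Longrightarrow> (x,b)\<in>M \<Longrightarrow> a = b"
   and add: "\<And>x a y b. (x,a)\<in>M \<Longrightarrow> (y,b)\<in>M \<Longrightarrow> (x+y,a+b)\<in>M"
   and scl: "\<And>x a r. (x,a)\<in>M \<Longrightarrow> (r *\<^sub>R x, r*a)\<in>M"
   and dom: "\<And>x a. (x,a)\<in>M \<Longrightarrow> a \<le> norm x"
   and zz: "(z, norm z) \<in> M" using M unfolding hbgood_def by blast+
  have z0: "(0,0) \<in> M" using scl[OF zz, of 0] by simp
  have key: "g - norm (u - x0) \<le> norm (s + x0) - f" if "(s,f)\<in>M" "(u,g)\<in>M" for s f u g
  proof -
    have "f + g \<le> norm (s + u)" using dom[OF add[OF that]] .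
    also have "s + u = (s + x0) + (u - x0)" by simp
    also have "norm \<dots> \<le> norm (s + x0) + norm (u - x0)" by (rule norm_triangle_ineq)
    finally show ?thesis by simp
  qed
  define L where "L = {g - norm (u - x0) | u g. (u,g)\<in>M}"
  define a where "a = Sup L"
  have Lne: "L \<noteq> {}" using z0 unfolding L_def by blast
  have Lbdd: "bdd_above L" unfolding L_def bdd_above_def using key[OF z0] by auto
  have lo: "g - norm (u - x0) \<le> a" if "(u,g)\<in>M" for u g
    unfolding a_def by (rule cSup_upper[OF _ Lbdd]) (use that L_def in blast)
  have hi: "a \<le> norm (s + x0) - f" if "(s,f)\<in>M" for s f
    unfolding a_def by (rule cSup_least[OF Lne]) (use key that L_def in blast)
  define M' where "M' = {(s + t *\<^sub>R x0, f + t*a) | s f t. (s,f)\<in>M}"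
  have M'good: "hbgood M' z" unfolding hbgood_def
  proof (intro conjI allI impI)
    fix x b1 b2 assume "(x,b1)\<in>M'" "(x,b2)\<in>M'"
    then obtain s f t s' f' t' where A: "(s,f)\<in>M" "(s',f')\<in>M" "x = s + t *\<^sub>R x0" "b1 = f + t*a"
      "x = s' + t' *\<^sub>R x0" "b2 = f' + t'*a" unfolding M'_def by blast
    show "b1 = b2"
    proof (cases "t = t'")
      case True
      then have "s = s'" using A by simp
      then show ?thesis using A True fn1 by blast
    next
      case False
      have "(s + (-1) *\<^sub>R s', f + (-1)*f') \<in> M" using add[OF A(1) scl[OF A(2)]] .
      then have "((1/(t'-t)) *\<^sub>R (s + (-1) *\<^sub>R s'), (1/(t'-t)) * (f + (-1)*f')) \<in> M" by (rule scl)
      moreover have "(1/(t'-t)) *\<^sub>R (s + (-1) *\<^sub>R s') = x0"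
      proof -
        have "s - s' = (t' - t) *\<^sub>R x0" using A(3,5) by (simp add: algebra_simps)
        then have "(1/(t'-t)) *\<^sub>R (s + (-1) *\<^sub>R s') = (1/(t'-t)) *\<^sub>R ((t' - t) *\<^sub>R x0)" by simp
        then show ?thesis using False by simp
      qed
      ultimately have "x0 \<in> fst ` M" by force
      then show ?thesis using x0 by blast
    qed
  next
    fix x b1 y b2 assume "(x,b1)\<in>M'" "(y,b2)\<in>M'"
    then obtain s f t s' f' t' where A: "(s,f)\<in>M" "(s',f')\<in>M" "x = s + t *\<^sub>R x0" "b1 = f + t*a"
      "y = s' + t' *\<^sub>R x0" "b2 = f' + t'*a" unfolding M'_def by blast
    have "(s+s', f+f') \<in> M" using add A by blast
    moreover have "x + y = (s+s') + (t+t') *\<^sub>R x0" "b1 + b2 = (f+f') + (t+t')*a"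
      using A by (simp_all add: algebra_simps)
    ultimately show "(x+y,b1+b2)\<in>M'" unfolding M'_def by blast
  next
    fix x b r assume "(x,b)\<in>M'"
    then obtain s f t where A: "(s,f)\<in>M" "x = s + t *\<^sub>R x0" "b = f + t*a" unfolding M'_def by blast
    have "(r *\<^sub>R s, r*f) \<in> M" using scl A by blast
    moreover have "r *\<^sub>R x = r *\<^sub>R s + (r*t) *\<^sub>R x0" "r * b = r*f + (r*t)*a"
      using A by (simp_all add: algebra_simps)
    ultimately show "(r *\<^sub>R x, r*b)\<in>M'" unfolding M'_def by blast
  next
    fix x b assume "(x,b)\<in>M'"
    then obtain s f t where A: "(s,f)\<in>M" "x = s + t *\<^sub>R x0" "b = f + t*a" unfolding M'_def by blast
    show "b \<le> norm x"
    proof (cases "t = 0")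
      case True then show ?thesis using A dom by simp
    next
      case False
      show ?thesis
      proof (cases "t > 0")
        case True
        have "((1/t) *\<^sub>R s, (1/t)*f) \<in> M" using scl A by blast
        then have h: "a \<le> norm ((1/t) *\<^sub>R s + x0) - (1/t)*f" by (rule hi)
        have "norm ((1/t) *\<^sub>R s + x0) * t = norm (s + t *\<^sub>R x0)"
        proof -
          have "s + t *\<^sub>R x0 = t *\<^sub>R ((1/t) *\<^sub>R s + x0)" using \<open>t \<noteq> 0\<close> by (simp add: algebra_simps)
          then show ?thesis using True by simp
        qed
        then have "t * a \<le> norm (s + t *\<^sub>R x0) - f"
          using mult_left_mono[OF h, of t] True by (simp add: algebra_simps)
        then show ?thesis using A by simp
      next
        case False
        then have tn: "t < 0" using \<open>t \<noteq> 0\<close> by simp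
        have "((-1/t) *\<^sub>R s, (-1/t)*f) \<in> M" using scl A by blast
        then have h: "(-1/t)*f - norm ((-1/t) *\<^sub>R s - x0) \<le> a" by (rule lo)
        have "norm ((-1/t) *\<^sub>R s - x0) * (-t) = norm (s + t *\<^sub>R x0)"
        proof -
          have "s + t *\<^sub>R x0 = (-t) *\<^sub>R ((-1/t) *\<^sub>R s - x0)" using \<open>t \<noteq> 0\<close> by (simp add: algebra_simps)
          then show ?thesis using tn by simp
        qed
        then have "f - norm (s + t *\<^sub>R x0) \<le> (-t) * a"
          using mult_left_mono[OF h, of "-t"] tn \<open>t \<noteq> 0\<close> by (simp add: algebra_simps)
        then show ?thesis using A by simp
      qed
    qed
  next
    show "(z, norm z) \<in> M'" unfolding M'_def using zz by force
  qed
  have "M \<subseteq> M'" unfolding M'_def by force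
  moreover have "(x0, a) \<in> M'" unfolding M'_def using z0 by force
  ultimately show ?thesis using M'good x0 by force
qed

lemma hahn_banach_sep:
  fixes z :: "'a::real_normed_vector"
  assumes "z \<noteq> 0"
  shows "\<exists>\<phi>::'a \<Rightarrow> real. bounded_linear \<phi> \<and> \<phi> z \<noteq> 0"
proof -
  have "\<exists>M\<in>{G. hbgood G z}. \<forall>X\<in>{G. hbgood G z}. M \<subseteq> X \<longrightarrow> X = M"
  proof (rule Zorn_Lemma2, intro ballI)
    fix C assume C: "C \<in> chains {G. hbgood G z}"
    show "\<exists>U\<in>{G. hbgood G z}. \<forall>X\<in>C. X \<subseteq> U"
    proof (cases "C = {}")
      case True then show ?thesis using hb_base[OF assms] by blast
    next
      case False then show ?thesis using hb_chain[OF C False] by blast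
    qed
  qed
  then obtain M where M: "hbgood M z" and max: "\<And>X. hbgood X z \<Longrightarrow> M \<subseteq> X \<Longrightarrow> X = M" by blast
  have fn1: "\<And>x a b. (x,a)\<in>M \<Longrightarrow> (x,b)\<in>M \<Longrightarrow> a = b"
   and add: "\<And>x a y b. (x,a)\<in>M \<Longrightarrow> (y,b)\<in>M \<Longrightarrow> (x+y,a+b)\<in>M"
   and scl: "\<And>x a r. (x,a)\<in>M \<Longrightarrow> (r *\<^sub>R x, r*a)\<in>M"
   and dom: "\<And>x a. (x,a)\<in>M \<Longrightarrow> a \<le> norm x"
   and zz: "(z, norm z) \<in> M" using M unfolding hbgood_def by blast+
  have full: "\<exists>a. (x,a) \<in> M" for x
  proof (rule ccontr)
    assume "\<nexists>a. (x,a) \<in> M"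
    then have "x \<notin> fst ` M" by force
    then show False using hb_ext[OF M] max by blast
  qed
  define \<phi> where "\<phi> x = (THE a. (x,a) \<in> M)" for x
  have phi: "(x, \<phi> x) \<in> M" for x
    unfolding \<phi>_def using full[of x] fn1 by (metis theI)
  have phiu: "(x, a) \<in> M \<Longrightarrow> \<phi> x = a" for x a using phi fn1 by blast
  have "bounded_linear \<phi>"
  proof (rule bounded_linear_intro[where K=1])
    fix x y show "\<phi> (x + y) = \<phi> x + \<phi> y" using phiu[OF add[OF phi phi]] .
  next
    fix r x show "\<phi> (r *\<^sub>R x) = r *\<^sub>R \<phi> x" using phiu[OF scl[OF phi]] by simp
  next
    fix x
    have "\<phi> x \<le> norm x" using dom[OF phi] .
    moreover have "- \<phi> x \<le> norm x" using dom[OF scl[OF phi[of x], of "-1"]] by simp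
    ultimately show "norm (\<phi> x) \<le> norm x * 1" by simp
  qed
  moreover have "\<phi> z \<noteq> 0" using phiu[OF zz] assms by simp
  ultimately show ?thesis by blast
qed

definition idx :: "nat \<Rightarrow> real \<Rightarrow> nat" where
  "idx m t = nat \<lfloor>t * 2^m\<rfloor>"

definition Iv :: "nat \<Rightarrow> nat \<Rightarrow> real set" where
  "Iv m i = {real i / 2^m ..< real (i+1) / 2^m}"

lemma mem_Iv: "t \<ge> 0 \<Longrightarrow> t \<in> Iv m i \<longleftrightarrow> idx m t = i"
proof -
  assume t: "t \<ge> 0"
  have "t \<in> Iv m i \<longleftrightarrow> real i \<le> t * 2^m \<and> t * 2^m < real i + 1"
    unfolding Iv_def by (simp add: field_simps)
  also have "\<dots> \<longleftrightarrow> \<lfloor>t * 2^m\<rfloor> = int i" by (simp add: floor_eq_iff)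
  also have "\<dots> \<longleftrightarrow> idx m t = i" unfolding idx_def using t by auto
  finally show ?thesis .
qed

lemma Iv_sub: "i < 2^m \<Longrightarrow> Iv m i \<subseteq> {0..<1}"
proof -
  assume i: "i < 2^m"
  then have "real (i+1) \<le> 2^m" by (metis Suc_eq_plus1 Suc_leI of_nat_le_iff of_nat_numeral of_nat_power)
  then have "real (i+1) / 2^m \<le> 1" by simp
  then show ?thesis unfolding Iv_def by auto
qed

lemma idx_lt: "t \<in> {0..<1} \<Longrightarrow> idx m t < 2^m"
proof -
  assume t: "t \<in> {0..<1}"
  have "t * 2^m < 2^m" using t by simp
  then have "\<lfloor>t * 2^m\<rfloor> < 2^m" by (metis floor_less_iff of_int_numeral of_int_power floor_of_int le_less_trans floor_le_iff less_eq_real_def) 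
  then show ?thesis unfolding idx_def using t by (simp add: nat_less_iff)
qed

lemma idx_pt: "idx m (real i / 2^m) = i"
  unfolding idx_def by simp

lemma idx_div:
  assumes "t \<ge> 0" "l \<le> m"
  shows "idx l t = idx m t div 2^(m-l)"
proof -
  have e: "(2::real)^m = 2^l * 2^(m-l)" using assms(2) by (simp add: power_add[symmetric])
  have "t * 2^l = (t * 2^m) / real_of_int (2^(m-l))"
    unfolding e by simp
  then have "\<lfloor>t * 2^l\<rfloor> = \<lfloor>t * 2^m\<rfloor> div 2^(m-l)"
    using floor_divide_real_eq_div[of "2^(m-l)" "t * 2^m"] by simp
  then show ?thesis unfolding idx_def using assms
    by (simp add: nat_div_distrib nat_power_eq)
qed

lemma dyint: "dyadic_intervals m = Iv m ` {..<2^m}"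
  unfolding dyadic_intervals_def Iv_def by auto

lemma gen_sub: "dyadic_intervals m \<subseteq> Pow {0..<1}"
  unfolding dyint using Iv_sub by auto

lemma space_dyF: "space (dyF m) = {0..<1}"
  unfolding dyF_def using gen_sub by (simp add: space_measure_of)

lemma sets_dyF: "sets (dyF m) = sigma_sets {0..<1} (dyadic_intervals m)"
  unfolding dyF_def using gen_sub by (simp add: sets_measure_of)

lemma Iv_in: "i < 2^m \<Longrightarrow> Iv m i \<in> sets (dyF m)"
  unfolding sets_dyF dyint by auto

lemma resp_sets:
  assumes "S \<in> sets (dyF m)"
  shows "\<forall>s t. s \<in> {0..<1} \<longrightarrow> t \<in> {0..<1} \<longrightarrow> idx m s = idx m t \<longrightarrow> (s \<in> S \<longleftrightarrow> t \<in> S)"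
  using assms unfolding sets_dyF
proof (induction rule: sigma_sets.induct)
  case (Basic a)
  then obtain i where "a = Iv m i" unfolding dyint by auto
  then show ?case using mem_Iv by auto
next
  case Empty then show ?case by simp
next
  case (Compl a) then show ?case by blast
next
  case (Union a) then show ?case by blast
qed

lemma sets_dyF_sub: "S \<in> sets (dyF m) \<Longrightarrow> S \<subseteq> {0..<1}"
  using sets.sets_into_space space_dyF by blast

lemma Iv_le: "real i / 2^m \<le> real (i+1) / 2^m"
  by (simp add: divide_right_mono)

lemma Iv_fin: "emeasure lborel (Iv m i) < \<infinity>"
  unfolding Iv_def using emeasure_lborel_Ico[OF Iv_le] by simp

lemma Iv_bor: "Iv m i \<in> sets borel" by (simp add: Iv_def)

lemma Iv_meas: "measure lborel (Iv m i) = 1 / 2^m"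
  unfolding Iv_def using Iv_le[of i m] by (simp add: field_simps)

definition lc :: "nat \<Rightarrow> (real \<Rightarrow> 'a) \<Rightarrow> bool" where
  "lc m g \<longleftrightarrow> (\<forall>s t. s \<in> {0..<1} \<longrightarrow> t \<in> {0..<1} \<longrightarrow> idx m s = idx m t \<longrightarrow> g s = g t)"

lemma lc_meas:
  fixes g :: "real \<Rightarrow> 'a::metric_space"
  assumes "g \<in> borel_measurable (dyF l)"
  shows "lc l g"
  unfolding lc_def
proof (intro allI impI)
  fix s t assume st: "s \<in> {0..<1}" "t \<in> {0..<1}" "idx l s = idx l t"
  have "g -` {g s} \<inter> space (dyF l) \<in> sets (dyF l)"
    by (rule measurable_sets[OF assms]) (simp add: borel_closed)
  then have "g -` {g s} \<inter> {0..<1} \<in> sets (dyF l)" by (simp add: space_dyF)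
  from resp_sets[OF this] st have "t \<in> g -` {g s} \<inter> {0..<1}" by blast
  then show "g s = g t" by simp
qed

lemma lc_mono: "lc l g \<Longrightarrow> l \<le> m \<Longrightarrow> lc m g"
  unfolding lc_def using idx_div by (metis atLeastLessThan_iff)

lemma integral_lc:
  fixes g :: "real \<Rightarrow> real"
  assumes "lc m g"
  shows "(LINT t:{0..<1}|lborel. g t) = (\<Sum>i<2^m. g (real i / 2^m)) / 2^m"
proof -
  have pw: "indicator {0..<1} t *\<^sub>R g t = (\<Sum>i<2^m. g (real i / 2^m) * indicator (Iv m i) t)" for t
  proof (cases "t \<in> {0..<1}")
    case True
    have ind: "indicator (Iv m i) t = (if i = idx m t then 1 else (0::real))" for i
      using mem_Iv[of t m i] True by (auto simp: indicator_def)
    have "(\<Sum>i<2^m. g (real i / 2^m) * indicator (Iv m i) t) = g (real (idx m t) / 2^m)"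
      unfolding ind using idx_lt[OF True, of m] by (simp add: if_distrib cong: if_cong)
    also have "\<dots> = g t"
    proof -
      have "idx m t < 2^m" using idx_lt[OF True] .
      then have "real (idx m t) < 2^m" by (metis of_nat_less_iff of_nat_numeral of_nat_power)
      then have p: "real (idx m t) / 2^m \<in> {0..<1}" by simp
      show ?thesis using assms p True idx_pt unfolding lc_def by metis
    qed
    finally show ?thesis using True by simp
  next
    case False
    have "indicator (Iv m i) t = (0::real)" if "i < 2^m" for i
      using Iv_sub[OF that] False by (auto simp: indicator_def)
    then show ?thesis using False by simp
  qed
  have "(LINT t:{0..<1}|lborel. g t) = (LINT t|lborel. (\<Sum>i<2^m. g (real i / 2^m) * indicator (Iv m i) t))"
    unfolding set_lebesgue_integral_def using pw by simp
  also have "\<dots> = (\<Sum>i<2^m. g (real i / 2^m) * measure lborel (Iv m i))"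
    by (subst Bochner_Integration.integral_sum)
       (auto intro!: integrable_real_indicator integrable_mult_right Iv_fin simp: Iv_bor)
  also have "\<dots> = (\<Sum>i<2^m. g (real i / 2^m) / 2^m)"
    by (intro sum.cong refl) (simp add: Iv_meas)
  finally show ?thesis by (simp add: sum_divide_distrib)
qed

lemma lc_comp: "lc m g \<Longrightarrow> lc m (\<lambda>t. h (g t))"
  unfolding lc_def by metis

lemma sum_pairs: "(\<Sum>i<2*(N::nat). a i) = (\<Sum>j<N. a (2*j) + a (2*j+1))"
  by (induction N) (simp_all add: algebra_simps)

lemma tele: "(\<Sum>k\<in>{1..(n::nat)}. f k - f (k-1)) = (f n - f 0 :: real)"
  by (induction n) (simp_all add: sum.atLeast1_atMost_eq)

lemma powr_inv1: "0 \<le> a \<Longrightarrow> q > 0 \<Longrightarrow> (a powr (1/q)) powr q = (a::real)"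
  by (simp add: powr_powr)

lemma powr_inv2: "0 \<le> a \<Longrightarrow> q > 0 \<Longrightarrow> (a powr q) powr (1/q) = (a::real)"
  by (simp add: powr_powr)

lemma Lq_pow: "q > 0 \<Longrightarrow> Lq_norm q f powr q = (LINT t:{0..<1}|lborel. norm (f t) powr q)"
  unfolding Lq_norm_def
  by (rule powr_inv1) (auto simp: set_lebesgue_integral_def intro!: Bochner_Integration.integral_nonneg)

lemma D_nonneg:
  fixes a b :: "'a::real_normed_vector"
  assumes q: "q \<ge> 1"
  shows "0 \<le> (norm a powr q + norm b powr q) / 2 - norm ((1/2) *\<^sub>R (a + b)) powr q"
proof -
  define m where "m = (norm a + norm b) / 2"
  have hm: "norm ((1/2) *\<^sub>R (a + b)) \<le> m"
    unfolding m_def using norm_triangle_ineq[of a b] by simp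
  have h1: "norm ((1/2) *\<^sub>R (a + b)) powr q \<le> m powr q"
    by (rule powr_mono2[OF _ _ hm]) (use q in auto)
  have h2: "m powr q \<le> (norm a powr q + norm b powr q) / 2"
  proof (cases "norm a = 0 \<or> norm b = 0")
    case True
    then obtain u where u: "m = u / 2" "norm a powr q + norm b powr q = u powr q" "u \<ge> 0"
      unfolding m_def using q by (auto simp: powr_0)
    have "(u/2) powr q = u powr q / 2 powr q" using u by (simp add: powr_divide)
    also have "\<dots> \<le> u powr q / 2"
    proof -
      have "2 powr 1 \<le> 2 powr q" by (rule powr_mono) (use q in auto)
      then have "2 \<le> 2 powr q" by simp
      then show ?thesis by (intro divide_left_mono) auto
    qed
    finally show ?thesis using u by (simp only:)
  next
    case False
    then have pos: "norm a \<in> {0<..}" "norm b \<in> {0<..}" by auto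
    have "(\<lambda>x. x powr q) ((1 - 1/2) *\<^sub>R norm a + (1/2) *\<^sub>R norm b)
       \<le> (1 - 1/2) * norm a powr q + (1/2) * norm b powr q"
      by (rule convex_onD[OF powr_convex[OF q] _ _ pos]) auto
    then show ?thesis unfolding m_def by (simp add: field_simps)
  qed
  from h1 h2 show ?thesis by simp
qed

lemma dyF0_sets: "A \<in> sets (dyF 0) \<Longrightarrow> A = {} \<or> A = {0..<1}"
proof -
  assume A: "A \<in> sets (dyF 0)"
  have sub: "A \<subseteq> {0..<1}" using sets_dyF_sub[OF A] .
  have i0: "idx 0 t = 0" if "t \<in> {0..<1}" for t using idx_lt[OF that, of 0] by simp
  show ?thesis
  proof (cases "A = {}")
    case False
    then obtain s where s: "s \<in> A" by auto
    have "t \<in> A" if t: "t \<in> {0..<1}" for t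
    proof -
      have "s \<in> {0..<1} \<longrightarrow> t \<in> {0..<1} \<longrightarrow> idx 0 s = idx 0 t \<longrightarrow> (s \<in> A \<longleftrightarrow> t \<in> A)"
        using resp_sets[OF A] by blast
      moreover have "s \<in> {0..<1}" using s sub by blast
      ultimately show ?thesis using i0 t s by simp
    qed
    then show ?thesis using sub by auto
  qed simp
qed

lemma partA:
  fixes T :: "'a::banach \<Rightarrow> 'b::banach" and q c :: real
  assumes T: "bounded_linear T" and q: "q \<ge> 2" and c: "c > 0"
    and cot: "strong_mart_cotype T q c"
  shows "uniformly_q_convex T q c"
  unfolding uniformly_q_convex_def
proof (intro allI)
  fix xp xm :: 'a
  have q0: "q > 0" using q by simp
  have lT: "linear T" using T by (rule bounded_linear.linear)
  define x where "x = (1/2) *\<^sub>R (xp + xm)"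
  define y where "y = (1/2) *\<^sub>R (xp - xm)"
  define d where "d = (\<lambda>k::nat. \<lambda>t::real. if k = 0 then x else if k = 1 then (if t \<in> {..<1/2} then y else -y) else 0)"
  have d1: "d 1 = (\<lambda>t. if t \<in> {..<1/2} then y else -y)" unfolding d_def by simp
  have half: "t \<in> {..<1/2} \<longleftrightarrow> idx 1 t = 0" if "t \<in> {0..<1}" for t
    using mem_Iv[of t 1 0] that by (auto simp: Iv_def)
  have lc1: "lc 1 (d 1)" unfolding lc_def d1 using half by auto
  have mart: "dyadic_mart_diff 1 d"
    unfolding dyadic_mart_diff_def
  proof (intro conjI ballI allI impI)
    fix k assume "k \<le> (1::nat)"
    then consider "k = 0" | "k = 1" by linarith
    then show "d k \<in> borel_measurable (dyF k)"
    proof cases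
      case 1 then show ?thesis by (simp add: d_def)
    next
      case 2
      have "{..<1/2} \<inter> space (dyF 1) = Iv 1 0" by (auto simp: Iv_def space_dyF)
      then have "{..<1/2} \<inter> space (dyF 1) \<in> sets (dyF 1)" using Iv_in[of 0 1] by simp
      from measurable_If_set[OF measurable_const[of y] measurable_const[of "-y"] this]
      show ?thesis unfolding 2 d1 by simp
    qed
  next
    fix k A and \<phi> :: "'a \<Rightarrow> real"
    assume k: "k \<in> {1..1::nat}" and A: "A \<in> sets (dyF (k-1))" and \<phi>: "bounded_linear \<phi>"
    have k1: "k = 1" using k by simp
    have lphi: "linear \<phi>" using \<phi> by (rule bounded_linear.linear)
    from A k1 have "A = {} \<or> A = {0..<1}" using dyF0_sets by simp
    then show "(LINT t:A|lborel. \<phi> (d k t)) = 0"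
    proof
      assume "A = {}" then show ?thesis by (simp add: set_lebesgue_integral_def)
    next
      assume A1: "A = {0..<1}"
      have "(LINT t:A|lborel. \<phi> (d k t)) = (\<Sum>i<2^1. \<phi> (d 1 (real i / 2^1))) / 2^1"
        unfolding A1 k1 by (rule integral_lc[OF lc_comp[OF lc1]])
      also have "\<dots> = (\<phi> (d 1 (real 0 / 2^1)) + \<phi> (d 1 (real 1 / 2^1))) / 2"
        by (simp add: numeral_2_eq_2 del: One_nat_def)
      also have "d 1 (real 0 / 2^1) = y" unfolding d1 by simp
      also have "d 1 (real 1 / 2^1) = -y" unfolding d1 by simp
      also have "(\<phi> y + \<phi> (-y)) / 2 = 0" by (simp add: linear_neg[OF lphi])
      finally show ?thesis .
    qed
  qed
  have dx: "\<forall>t\<in>{0..<1}. d 0 t = x" by (simp add: d_def)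
  from cot mart dx have main:
    "(norm x powr q + c powr (-q) * (\<Sum>k\<in>{1..1}. Lq_norm q (\<lambda>t. T (d k t)) powr q)) powr (1/q)
       \<le> Lq_norm q (\<lambda>t. \<Sum>k\<le>1. d k t)"
    using cot[unfolded strong_mart_cotype_def, THEN spec[of _ 1], THEN spec[of _ x], THEN spec[of _ d]] mart dx
    by blast
  have nTy: "norm (T (d 1 t)) = norm (T y)" for t
    unfolding d1 by (simp add: linear_neg[OF lT])
  have L1: "Lq_norm q (\<lambda>t. T (d 1 t)) powr q = norm (T y) powr q"
  proof -
    have lc0: "lc 0 (\<lambda>t. norm (T (d 1 t)) powr q)" unfolding lc_def nTy by simp
    show ?thesis unfolding Lq_pow[OF q0] by (subst integral_lc[OF lc0]) (use nTy[of 0] in simp)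
  qed
  define S where "S = (norm xp powr q + norm xm powr q) / 2"
  have xy1: "x + y = xp" "x + - y = xm" unfolding x_def y_def by (simp_all add: algebra_simps flip: scaleR_add_left)
  have L2: "Lq_norm q (\<lambda>t. \<Sum>k\<le>1. d k t) = S powr (1/q)"
  proof -
    have e: "(\<lambda>t. \<Sum>k\<le>1. d k t) = (\<lambda>t. x + d 1 t)" by (simp add: d_def)
    have lc: "lc 1 (\<lambda>t. norm (x + d 1 t) powr q)" by (rule lc_comp[OF lc1])
    have "(\<Sum>i<2^1. norm (x + d 1 (real i / 2^1)) powr q) / 2^1
        = (norm (x + d 1 (real 0 / 2^1)) powr q + norm (x + d 1 (real 1 / 2^1)) powr q) / 2"
      by (simp add: numeral_2_eq_2 del: One_nat_def)
    also have "d 1 (real 0 / 2^1) = y" unfolding d1 by simp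
    also have "d 1 (real 1 / 2^1) = -y" unfolding d1 by simp
    finally have "(\<Sum>i<2^1. norm (x + d 1 (real i / 2^1)) powr q) / 2^1 = S"
      unfolding S_def xy1[symmetric] by simp
    then show ?thesis unfolding Lq_norm_def e integral_lc[OF lc] by simp
  qed
  have Sge: "0 \<le> S" unfolding S_def by simp
  have lhs0: "0 \<le> norm x powr q + c powr (-q) * norm (T y) powr q" by simp
  have "(norm x powr q + c powr (-q) * norm (T y) powr q) powr (1/q) \<le> S powr (1/q)"
    using main L1 L2 by simp
  then have "((norm x powr q + c powr (-q) * norm (T y) powr q) powr (1/q)) powr q \<le> (S powr (1/q)) powr q"
    by (rule powr_mono2[rotated 2]) (use q0 in auto)
  then have ineq: "norm x powr q + c powr (-q) * norm (T y) powr q \<le> S"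
    unfolding powr_inv1[OF lhs0 q0] powr_inv1[OF Sge q0] .
  define D where "D = S - norm x powr q"
  have cq: "c powr q * c powr (-q) = 1" using c by (simp add: powr_minus)
  have "norm (T y) powr q = c powr q * (c powr (-q) * norm (T y) powr q)"
    using cq by (simp add: mult.assoc[symmetric])
  also have "\<dots> \<le> c powr q * D" unfolding D_def using ineq c by (intro mult_left_mono) auto
  finally have ty: "norm (T y) powr q \<le> c powr q * D" .
  have "0 \<le> c powr (-q) * norm (T y) powr q" by simp
  then have D0: "0 \<le> D" using ineq unfolding D_def by linarith
  have "norm (T y) = (norm (T y) powr q) powr (1/q)" using powr_inv2[OF _ q0] by simp
  also have "\<dots> \<le> (c powr q * D) powr (1/q)"
    by (rule powr_mono2[OF _ _ ty]) (use q0 in auto)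
  also have "\<dots> = c * D powr (1/q)"
    using c D0 q0 by (simp add: powr_mult powr_inv2)
  finally have fin: "norm (T y) \<le> c * D powr (1/q)" .
  have "(1/2) *\<^sub>R (T xp - T xm) = T y" unfolding y_def linear_scale[OF lT] linear_diff[OF lT] ..
  moreover have "D = (norm xp powr q + norm xm powr q) / 2 - norm ((1/2) *\<^sub>R (xp + xm)) powr q"
    unfolding D_def S_def x_def ..
  ultimately show "norm ((1/2) *\<^sub>R (T xp - T xm)) \<le>
        c * ((norm xp powr q + norm xm powr q) / 2 - norm ((1/2) *\<^sub>R (xp + xm)) powr q) powr (1/q)"
    using fin by simp
qed

lemma sum_delta_lt: "(j::nat) < N \<Longrightarrow> (\<Sum>jj<N. if jj = j then X else 0) = (X::real)"
  by (simp add: sum.delta)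

lemma partB:
  fixes T :: "'a::banach \<Rightarrow> 'b::banach" and q c :: real
  assumes T: "bounded_linear T" and q: "q \<ge> 2" and c: "c > 0"
    and conv: "uniformly_q_convex T q c"
  shows "strong_mart_cotype T q c"
  unfolding strong_mart_cotype_def
proof (intro allI impI)
  fix n x and d :: "nat \<Rightarrow> real \<Rightarrow> 'a"
  assume H: "dyadic_mart_diff n d \<and> (\<forall>t\<in>{0..<1}. d 0 t = x)"
  have meas: "\<And>k. k \<le> n \<Longrightarrow> d k \<in> borel_measurable (dyF k)"
    using H unfolding dyadic_mart_diff_def by simp
  have martA: "\<forall>k\<in>{1..n}. \<forall>A\<in>sets (dyF (k-1)). (\<forall>\<phi>::'a \<Rightarrow> real. bounded_linear \<phi> \<longrightarrow> (LINT t:A|lborel. \<phi> (d k t)) = 0)"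
    by (rule conjunct2[OF conjunct1[OF H[unfolded dyadic_mart_diff_def]]])
  have mart: "(LINT t:A|lborel. \<phi> (d k t)) = 0"
    if "k \<in> {1..n}" "A \<in> sets (dyF (k-1))" "bounded_linear (\<phi>::'a \<Rightarrow> real)" for k A \<phi>
    by (rule martA[rule_format, OF that])
  have d0: "\<And>t. t\<in>{0..<1} \<Longrightarrow> d 0 t = x" using H by simp
  have q0: "q > 0" using q by simp
  have lT: "linear T" using T by (rule bounded_linear.linear)
  have lcd: "lc m (d k)" if "k \<le> n" "k \<le> m" for k m
    using lc_mono[OF lc_meas[OF meas[OF that(1)]] that(2)] .
  define F where "F k t = (\<Sum>l\<le>k. d l t)" for k t
  have lcF: "lc k (F k)" if "k \<le> n" for k
    unfolding lc_def
  proof (intro allI impI)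
    fix s t assume st: "s \<in> {0..<1}" "t \<in> {0..<1}" "idx k s = idx k t"
    have "d l s = d l t" if "l \<le> k" for l
    proof -
      have "lc k (d l)" using lcd[OF _ that] that \<open>k \<le> n\<close> by linarith
      from this[unfolded lc_def, rule_format, OF st] show ?thesis .
    qed
    then show "F k s = F k t" unfolding F_def by (intro sum.cong) auto
  qed
  define N where "N k = (LINT t:{0..<1}|lborel. norm (F k t) powr q)" for k
  define L where "L k = (LINT t:{0..<1}|lborel. norm (T (d k t)) powr q)" for k
  have step: "L k \<le> c powr q * (N k - N (k-1))" if k: "k \<in> {1..n}" for k
  proof -
    obtain m where km: "k = Suc m" using k by (cases k) auto
    have mn: "Suc m \<le> n" "m \<le> n" using k km by auto
    define p where "p j = real (2*j) / 2^(Suc m)" for j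
    define p' where "p' j = real (2*j+1) / 2^(Suc m)" for j
    have pj: "p j = real j / 2^m" for j unfolding p_def by simp
    have pin: "p j \<in> {0..<1}" "p' j \<in> {0..<1}" if j: "j < 2^m" for j
    proof -
      have "2*j+1 < 2^(Suc m)" using j by simp
      then have "real (2*j+1) < 2^(Suc m)" by (metis of_nat_less_iff of_nat_numeral of_nat_power)
      then show "p' j \<in> {0..<1}" unfolding p'_def by simp
      have "real j < 2^m" using j by (metis of_nat_less_iff of_nat_numeral of_nat_power)
      then show "p j \<in> {0..<1}" unfolding pj by simp
    qed
    have ik: "idx (Suc m) (p j) = 2*j" "idx (Suc m) (p' j) = 2*j+1" for j
      unfolding p_def p'_def by (rule idx_pt)+
    have im: "idx m (p j) = j" "idx m (p' j) = j" for j
    proof -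
      have "idx m (p j) = idx (Suc m) (p j) div 2^(Suc m - m)" by (rule idx_div) (auto simp: p_def)
      then show "idx m (p j) = j" unfolding ik by simp
      have "idx m (p' j) = idx (Suc m) (p' j) div 2^(Suc m - m)" by (rule idx_div) (auto simp: p'_def)
      then show "idx m (p' j) = j" unfolding ik by simp
    qed
    have Fm_eq: "F m (p' j) = F m (p j)" if j: "j < 2^m" for j
    proof -
      have "lc m (F m)" by (rule lcF[OF mn(2)])
      from this[unfolded lc_def, rule_format, OF pin(2)[OF j] pin(1)[OF j]] im show ?thesis by simp
    qed
    have Fk: "F (Suc m) t = F m t + d (Suc m) t" for t unfolding F_def by simp
    \<comment> \<open>martingale condition gives opposite values\<close>
    have neg: "d k (p' j) = - d k (p j)" if j: "j < 2^m" for j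
    proof -
      have "\<phi> (d k (p j) + d k (p' j)) = 0" if \<phi>: "bounded_linear \<phi>" for \<phi> :: "'a \<Rightarrow> real"
      proof -
        have lphi: "linear \<phi>" using \<phi> by (rule bounded_linear.linear)
        have A: "Iv m j \<in> sets (dyF (k-1))" using Iv_in[OF j] km by simp
        have sub: "Iv m j \<subseteq> {0..<1}" using Iv_sub[OF j] .
        define h where "h t = indicator (Iv m j) t * \<phi> (d k t)" for t
        have "0 = (LINT t:Iv m j|lborel. \<phi> (d k t))" using mart[OF k A \<phi>] by simp
        also have "\<dots> = (LINT t:{0..<1}|lborel. h t)"
          unfolding set_lebesgue_integral_def h_def
          by (intro Bochner_Integration.integral_cong refl) (use sub in \<open>auto simp: indicator_def\<close>)
        also have "\<dots> = (\<Sum>i<2^k. h (real i / 2^k)) / 2^k"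
        proof (rule integral_lc)
          show "lc k h" unfolding lc_def
          proof (intro allI impI)
            fix s t assume st: "s \<in> {0..<1}" "t \<in> {0..<1}" "idx k s = idx k t"
            have "idx m s = idx m t" using idx_div[of s m k] idx_div[of t m k] st km by simp
            then have "s \<in> Iv m j \<longleftrightarrow> t \<in> Iv m j" using mem_Iv[of s m j] mem_Iv[of t m j] st by simp
            moreover have "d k s = d k t"
            proof -
              have "lc k (d k)" by (rule lcd[OF mn(1)[folded km] order.refl])
              from this[unfolded lc_def, rule_format, OF st] show ?thesis .
            qed
            ultimately show "h s = h t" unfolding h_def indicator_def by simp
          qed
        qed
        also have "(\<Sum>i<2^k. h (real i / 2^k)) = (\<Sum>i<2*2^m. h (real i / 2^(Suc m)))"
          unfolding km by simp
        also have "\<dots> = (\<Sum>jj<2^m. h (p jj) + h (p' jj))"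
          unfolding sum_pairs p_def p'_def ..
        also have "\<dots> = (\<Sum>jj<2^m. if jj = j then \<phi> (d k (p j)) + \<phi> (d k (p' j)) else 0)"
        proof (intro sum.cong refl)
          fix jj :: nat assume "jj \<in> {..<2^m}"
          have "p jj \<in> Iv m j \<longleftrightarrow> jj = j" using mem_Iv[of "p jj" m j] im pin by (auto simp: p_def)
          moreover have "p' jj \<in> Iv m j \<longleftrightarrow> jj = j" using mem_Iv[of "p' jj" m j] im by (auto simp: p'_def)
          ultimately show "h (p jj) + h (p' jj) = (if jj = j then \<phi> (d k (p j)) + \<phi> (d k (p' j)) else 0)"
            unfolding h_def indicator_def by auto
        qed
        also have "\<dots> = \<phi> (d k (p j)) + \<phi> (d k (p' j))" by (rule sum_delta_lt[OF j])
        finally have "\<phi> (d k (p j)) + \<phi> (d k (p' j)) = 0" by simp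
        then show ?thesis by (simp add: linear_add[OF lphi])
      qed
      then have "d k (p j) + d k (p' j) = 0" using hahn_banach_sep by blast
      then show ?thesis by (simp add: eq_neg_iff_add_eq_0 add.commute)
    qed
    have pw: "norm (T (d k (p j))) powr q + norm (T (d k (p' j))) powr q
        \<le> c powr q * (norm (F k (p j)) powr q + norm (F k (p' j)) powr q - 2 * norm (F m (p j)) powr q)"
      if j: "j < 2^m" for j
    proof -
      define f where "f = F m (p j)"
      define y where "y = d k (p j)"
      define D where "D = (norm (f + y) powr q + norm (f - y) powr q) / 2 - norm ((1/2) *\<^sub>R ((f + y) + (f - y))) powr q"
      have Fkp: "F k (p j) = f + y" unfolding km Fk f_def y_def km ..
      have Fkp': "F k (p' j) = f - y" unfolding km Fk f_def y_def using Fm_eq[OF j] neg[OF j] km by simp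
      have mid: "(1/2) *\<^sub>R ((f + y) + (f - y)) = f" by (simp flip: scaleR_2)
      have D0: "0 \<le> D" unfolding D_def by (rule D_nonneg) (use q in simp)
      have "(1/2) *\<^sub>R (T (f + y) - T (f - y)) = T y"
      proof -
        have "T (f + y) - T (f - y) = T ((f + y) - (f - y))" by (rule linear_diff[OF lT, symmetric])
        also have "(f + y) - (f - y) = 2 *\<^sub>R y" by (simp add: scaleR_2)
        finally show ?thesis by (simp add: linear_scale[OF lT])
      qed
      then have ty: "norm (T y) \<le> c * D powr (1/q)"
        using conv[unfolded uniformly_q_convex_def, rule_format, of "f + y" "f - y"] unfolding D_def by simp
      have "norm (T y) powr q \<le> (c * D powr (1/q)) powr q"
        by (rule powr_mono2[OF _ _ ty]) (use q0 in auto)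
      also have "\<dots> = c powr q * D"
        using c D0 q0 by (simp add: powr_mult powr_inv1)
      finally have tyq: "norm (T y) powr q \<le> c powr q * D" .
      have ny: "norm (T (d k (p' j))) = norm (T y)" unfolding neg[OF j] y_def by (simp add: linear_neg[OF lT])
      have "norm (T (d k (p j))) powr q + norm (T (d k (p' j))) powr q = 2 * norm (T y) powr q"
        unfolding ny y_def by simp
      also have "\<dots> \<le> 2 * (c powr q * D)" using tyq by simp
      also have "\<dots> = c powr q * (norm (F k (p j)) powr q + norm (F k (p' j)) powr q - 2 * norm (F m (p j)) powr q)"
      proof -
        have Dm: "D = (norm (f + y) powr q + norm (f - y) powr q) / 2 - norm f powr q"
          unfolding D_def mid ..
        show ?thesis unfolding Dm Fkp Fkp' f_def[symmetric] by (simp add: algebra_simps)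
      qed
      finally show ?thesis .
    qed
    have Lk: "L k = (\<Sum>j<2^m. norm (T (d k (p j))) powr q + norm (T (d k (p' j))) powr q) / 2^(Suc m)"
    proof -
      have lcg: "lc k (\<lambda>t. norm (T (d k t)) powr q)" by (rule lc_comp[OF lcd[OF mn(1)[folded km] order.refl]])
      have "L k = (\<Sum>i<2^k. norm (T (d k (real i / 2^k))) powr q) / 2^k"
        unfolding L_def by (rule integral_lc[OF lcg])
      also have "\<dots> = (\<Sum>i<2*2^m. norm (T (d k (real i / 2^(Suc m))))  powr q) / 2^(Suc m)"
        unfolding km by simp
      finally show ?thesis unfolding sum_pairs p_def p'_def .
    qed
    have Nk: "N k = (\<Sum>j<2^m. norm (F k (p j)) powr q + norm (F k (p' j)) powr q) / 2^(Suc m)"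
    proof -
      have lcg: "lc k (\<lambda>t. norm (F k t) powr q)" by (rule lc_comp[OF lcF[OF mn(1)[folded km]]])
      have "N k = (\<Sum>i<2^k. norm (F k (real i / 2^k)) powr q) / 2^k"
        unfolding N_def by (rule integral_lc[OF lcg])
      also have "\<dots> = (\<Sum>i<2*2^m. norm (F k (real i / 2^(Suc m)))  powr q) / 2^(Suc m)"
        unfolding km by simp
      finally show ?thesis unfolding sum_pairs p_def p'_def .
    qed
    have Nm: "N (k-1) = (\<Sum>j<2^m. 2 * norm (F m (p j)) powr q) / 2^(Suc m)"
    proof -
      have lcg: "lc m (\<lambda>t. norm (F m t) powr q)" by (rule lc_comp[OF lcF[OF mn(2)]])
      have "N (k-1) = (\<Sum>j<2^m. norm (F m (real j / 2^m)) powr q) / 2^m"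
        unfolding N_def km by (simp add: integral_lc[OF lcg])
      also have "\<dots> = (\<Sum>j<2^m. 2 * norm (F m (p j)) powr q) / 2^(Suc m)"
        unfolding pj by (simp add: sum_distrib_left[symmetric])
      finally show ?thesis .
    qed
    have "L k \<le> (\<Sum>j<2^m. c powr q * (norm (F k (p j)) powr q + norm (F k (p' j)) powr q - 2 * norm (F m (p j)) powr q)) / 2^(Suc m)"
      unfolding Lk by (intro divide_right_mono sum_mono pw) auto
    also have "\<dots> = c powr q * (N k - N (k-1))"
      unfolding Nk Nm sum_distrib_left[symmetric] sum_subtractf by (simp add: field_simps)
    finally show ?thesis .
  qed
  have N0: "N 0 = norm x powr q"
  proof -
    have lc0: "lc 0 (\<lambda>t. norm (F 0 t) powr q)" unfolding lc_def F_def using d0 by simp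
    have "F 0 0 = x" unfolding F_def using d0[of 0] by simp
    then show ?thesis unfolding N_def by (subst integral_lc[OF lc0]) simp
  qed
  have cq: "c powr (-q) * c powr q = 1" using c by (simp add: powr_minus)
  have step2: "c powr (-q) * L k \<le> N k - N (k-1)" if k: "k \<in> {1..n}" for k
  proof -
    have "c powr (-q) * L k \<le> c powr (-q) * (c powr q * (N k - N (k-1)))"
      by (rule mult_left_mono[OF step[OF k]]) simp
    also have "\<dots> = N k - N (k-1)" using cq by (simp add: mult.assoc[symmetric])
    finally show ?thesis .
  qed
  have "c powr (-q) * (\<Sum>k\<in>{1..n}. L k) = (\<Sum>k\<in>{1..n}. c powr (-q) * L k)"
    by (simp add: sum_distrib_left)
  also have "\<dots> \<le> (\<Sum>k\<in>{1..n}. N k - N (k-1))" by (rule sum_mono[OF step2])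
  also have "\<dots> = N n - N 0" by (rule tele)
  finally have tot: "norm x powr q + c powr (-q) * (\<Sum>k\<in>{1..n}. L k) \<le> N n" using N0 by simp
  have L0: "0 \<le> L k" for k unfolding L_def set_lebesgue_integral_def
    by (intro Bochner_Integration.integral_nonneg) simp
  have base0: "0 \<le> norm x powr q + c powr (-q) * (\<Sum>k\<in>{1..n}. L k)"
    using L0 by (simp add: sum_nonneg)
  have "(norm x powr q + c powr (-q) * (\<Sum>k\<in>{1..n}. L k)) powr (1/q) \<le> N n powr (1/q)"
    by (rule powr_mono2[OF _ base0 tot]) (use q0 in simp)
  moreover have "Lq_norm q (\<lambda>t. T (d k t)) powr q = L k" for k
    unfolding L_def by (rule Lq_pow[OF q0])
  moreover have "Lq_norm q (\<lambda>t. \<Sum>k\<le>n. d k t) = N n powr (1/q)"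
    unfolding Lq_norm_def N_def F_def ..
  ultimately show "(norm x powr q + c powr (-q) * (\<Sum>k\<in>{1..n}. Lq_norm q (\<lambda>t. T (d k t)) powr q)) powr (1/q)
          \<le> Lq_norm q (\<lambda>t. \<Sum>k\<le>n. d k t)" by simp
qed

theorem theorem1:
  fixes T :: "'a::banach \<Rightarrow> 'b::banach" and q c :: real
  assumes "bounded_linear T" and "q \<ge> 2" and "c > 0"
  shows "uniformly_q_convex T q c \<longleftrightarrow> strong_mart_cotype T q c"
  using partA[OF assms] partB[OF assms] by blast

end
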